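(* Let $n \ge 3$ and let $(G,c)$ be a metric TSP instance with $n$ cities. Then every 2-optimal tour $T'$ in $G$ satisfies $$c(T') \le \sqrt{\tfrac{n}{2}}\; c(T^* ),$$ where $T^*$ is a shortest tour in $G$. Moreover, this bound is tight: for every positive integer $k$, with $n = 2k^2$, there exist a metric TSP instance with $n$ cities and a 2-optimal tour $T'$ in it such that $c(T') = \sqrt{n/2}\; c(T^* )$ and $c(T^* )>0$.
   Context: A metric TSP instance with $n$ cities consists of a complete undirected graph $G$ on $n$ vertices together with a distance function $c: E(G)\to\mathbb{R}_{\ge 0}$ satisfying the triangle inequality $c(x,y)+c(y,z)\ge c(x,z)$ for all vertices $x,y,z$ (we write $c(x,y)$ for $c(\{x,y\})$, and $c(x,x)=0$). A tour is a cycle in $G$ containing all vertices; its length is $c(T)=\sum_{e\in E(T)}c(e)$, and a shortest tour is a tour of minimum length. Tours are regarded as oriented cycles (each vertex has exactly one incoming and one outgoing edge). For two edges $(a,b)$ and $(x,y)$ of an oriented tour $T$, the 2-change replaces them by $(a,x)$ and $(b,y)$ (reversing the segment from $b$ to $x$), which yields a tour again; it is improving if $c(a,x)+c(b,y) < c(a,b)+c(x,y)$. A tour is 2-optimal if it admits no improving 2-change, i.e. $c(a,x)+c(b,y)\ge c(a,b)+c(x,y)$ for all pairs of edges $(a,b),(x,y)$ of the oriented tour. *)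

theory Defs
  imports Complex_Main
begin

definition metric_tsp :: "nat \<Rightarrow> (nat \<Rightarrow> nat \<Rightarrow> real) \<Rightarrow> bool" where
  "metric_tsp n c \<longleftrightarrow>
     (\<forall>x<n. \<forall>y<n. c x y \<ge> 0) \<and>
     (\<forall>x<n. \<forall>y<n. c x y = c y x) \<and>
     (\<forall>x<n. c x x = 0) \<and>
     (\<forall>x<n. \<forall>y<n. \<forall>z<n. c x y + c y z \<ge> c x z)"

text \<open>An oriented tour is given by the cyclic sequence of its vertices: the list
  T visits every city exactly once, with edges (T!i, T!((i+1) mod n)).\<close>

definition is_tour :: "nat \<Rightarrow> nat list \<Rightarrow> bool" where
  "is_tour n T \<longleftrightarrow> length T = n \<and> distinct T \<and> set T = {0..<n}"

definition tour_length :: "nat \<Rightarrow> (nat \<Rightarrow> nat \<Rightarrow> real) \<Rightarrow> nat list \<Rightarrow> real" where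
  "tour_length n c T = (\<Sum>i<n. c (T ! i) (T ! ((i + 1) mod n)))"

definition shortest_tour :: "nat \<Rightarrow> (nat \<Rightarrow> nat \<Rightarrow> real) \<Rightarrow> nat list \<Rightarrow> bool" where
  "shortest_tour n c T \<longleftrightarrow> is_tour n T \<and>
     (\<forall>T'. is_tour n T' \<longrightarrow> tour_length n c T \<le> tour_length n c T')"

definition two_optimal :: "nat \<Rightarrow> (nat \<Rightarrow> nat \<Rightarrow> real) \<Rightarrow> nat list \<Rightarrow> bool" where
  "two_optimal n c T \<longleftrightarrow> is_tour n T \<and>
     (\<forall>i<n. \<forall>j<n. i \<noteq> j \<longrightarrow>
        (let a = T ! i; b = T ! ((i + 1) mod n); x = T ! j; y = T ! ((j + 1) mod n)
         in c a x + c b y \<ge> c a b + c x y))"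

end

theory Submission
  imports Defs "HOL-Analysis.Analysis"
begin


definition dcirc :: "real \<Rightarrow> real \<Rightarrow> real \<Rightarrow> real" where
  "dcirc L p q = min \<bar>p - q\<bar> (L - \<bar>p - q\<bar>)"

definition tnt :: "real \<Rightarrow> real \<Rightarrow> real" where
  "tnt r u = max 0 (r - \<bar>u\<bar>)"

definition Gt :: "real \<Rightarrow> real \<Rightarrow> real" where
  "Gt r u = (let v = max (-r) (min r u) in r * v - v * abs v / 2 + r^2/2)"

lemma Gt_cont: "continuous_on S (\<lambda>x. Gt r (x + d))"
  unfolding Gt_def Let_def by (intro continuous_intros) auto

lemma Gt_deriv:
  assumes "r \<ge> 0" "u \<noteq> -r" "u \<noteq> 0" "u \<noteq> r"
  shows "(Gt r has_real_derivative tnt r u) (at u)"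
proof -
  consider "u < -r" | "-r < u \<and> u < 0" | "0 < u \<and> u < r" | "r < u" using assms by linarith
  then show ?thesis
  proof cases
    case 1
    have e: "tnt r u = 0" using 1 by (auto simp: tnt_def)
    have "((\<lambda>x. 0) has_real_derivative 0) (at u)" by simp
    then show ?thesis unfolding e
      by (rule has_field_derivative_transform_within_open[where S="{..<-r}"])
        (use 1 assms in \<open>auto simp: Gt_def power2_eq_square\<close>)
  next
    case 2
    have e: "tnt r u = r + u" using 2 unfolding tnt_def by (simp add: max_def abs_if)
    have "((\<lambda>x. r*x + x*x/2 + r^2/2) has_real_derivative (r + u)) (at u)"
      by (auto intro!: derivative_eq_intros simp: algebra_simps)
    then show ?thesis unfolding e
      by (rule has_field_derivative_transform_within_open[where S="{-r<..<0}"])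
        (use 2 in \<open>auto simp: Gt_def\<close>)
  next
    case 3
    have e: "tnt r u = r - u" using 3 unfolding tnt_def by (simp add: max_def abs_if)
    have "((\<lambda>x. r*x - x*x/2 + r^2/2) has_real_derivative (r - u)) (at u)"
      by (auto intro!: derivative_eq_intros simp: algebra_simps)
    then show ?thesis unfolding e
      by (rule has_field_derivative_transform_within_open[where S="{0<..<r}"])
        (use 3 in \<open>auto simp: Gt_def\<close>)
  next
    case 4
    have e: "tnt r u = 0" using 4 by (auto simp: tnt_def)
    have "((\<lambda>x. r^2) has_real_derivative 0) (at u)" by simp
    then show ?thesis unfolding e
      by (rule has_field_derivative_transform_within_open[where S="{r<..}"])
        (use 4 assms in \<open>auto simp: Gt_def power2_eq_square Let_def max_def\<close>)
  qed
qed

lemma tnt_int: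
  assumes "r \<ge> 0" "a \<le> b"
  shows "((\<lambda>x. tnt r (x + d)) has_integral (Gt r (b + d) - Gt r (a + d))) {a..b}"
proof (rule fundamental_theorem_of_calculus_interior_strong[where S="{-r-d, -d, r-d}"])
  fix x assume x: "x \<in> {a<..<b} - {-r-d, -d, r-d}"
  have "(Gt r has_real_derivative tnt r (x+d)) (at (x+d))"
    using x assms by (intro Gt_deriv) auto
  then have "((\<lambda>x. Gt r (x+d)) has_real_derivative tnt r (x+d)) (at x)"
    by (simp add: DERIV_shift)
  then show "((\<lambda>x. Gt r (x + d)) has_vector_derivative tnt r (x + d)) (at x)"
    by (simp add: has_real_derivative_iff_has_vector_derivative)
qed (use assms Gt_cont in auto)

lemma Gt_hi: "r \<ge> 0 \<Longrightarrow> u \<ge> r \<Longrightarrow> Gt r u = r^2"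
  by (auto simp: Gt_def Let_def power2_eq_square max_def min_def)

lemma Gt_lo: "r \<ge> 0 \<Longrightarrow> u \<le> -r \<Longrightarrow> Gt r u = 0"
  by (auto simp: Gt_def Let_def power2_eq_square max_def min_def)

lemma circ_tent_pt:
  assumes "0 \<le> c" "c \<le> L" "0 \<le> r" "r \<le> L/2" "0 \<le> x" "x \<le> L"
  shows "tnt r (x + -c) + tnt r (x + (L - c)) + tnt r (x + (-c - L)) = max 0 (r - dcirc L x c)"
  using assms unfolding tnt_def dcirc_def by (auto simp: max_def min_def abs_if)

lemma circ_tent_int:
  assumes "0 \<le> c" "c \<le> L" "0 \<le> r" "r \<le> L/2"
  shows "((\<lambda>x. max 0 (r - dcirc L x c)) has_integral r^2) {0..L}"
proof -
  have L: "0 \<le> L" using assms by linarith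
  have "((\<lambda>x. tnt r (x + -c) + tnt r (x + (L - c)) + tnt r (x + (-c - L))) has_integral
     ((Gt r (L + -c) - Gt r (0 + -c)) + (Gt r (L + (L-c)) - Gt r (0 + (L - c)))
      + (Gt r (L + (-c-L)) - Gt r (0 + (-c-L))))) {0..L}"
    by (intro has_integral_add tnt_int) (use assms L in auto)
  also have "((Gt r (L + -c) - Gt r (0 + -c)) + (Gt r (L + (L-c)) - Gt r (0 + (L - c)))
      + (Gt r (L + (-c-L)) - Gt r (0 + (-c-L)))) = Gt r (L + (L-c)) - Gt r (0 + (-c-L))"
    by simp
  also have "\<dots> = r^2" using assms by (simp add: Gt_hi Gt_lo)
  finally show ?thesis
    by (rule has_integral_eq[rotated]) (use circ_tent_pt assms in auto)
qed

lemma line_pack: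
  fixes y s :: "'i \<Rightarrow> real"
  assumes "finite J" "J \<noteq> {}" "\<forall>i\<in>J. \<forall>j\<in>J. i \<noteq> j \<and> y i \<le> y j \<longrightarrow> s i + s j \<le> y j - y i"
  shows "\<exists>a\<in>J. \<exists>b\<in>J. (\<forall>j\<in>J. y a \<le> y j \<and> y j \<le> y b) \<and> (\<Sum>i\<in>J. 2 * s i) \<le> y b - y a + s a + s b"
  using assms
proof (induction J rule: finite_psubset_induct)
  case (psubset J)
  have "Max (y ` J) \<in> y ` J" using psubset by (intro Max_in) auto
  then obtain b where b: "b \<in> J" "y b = Max (y ` J)" by force
  have bmax: "\<forall>j\<in>J. y j \<le> y b" using b psubset by auto
  show ?case
  proof (cases "J = {b}")
    case True
    then show ?thesis by auto
  next
    case False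
    define J' where "J' = J - {b}"
    have J': "J' \<subset> J" "J' \<noteq> {}" using False b unfolding J'_def by auto
    from psubset.IH[OF J'(1) J'(2)] psubset.prems J'(1)
    obtain a b' where ab: "a \<in> J'" "b' \<in> J'" "\<forall>j\<in>J'. y a \<le> y j \<and> y j \<le> y b'"
      "(\<Sum>i\<in>J'. 2 * s i) \<le> y b' - y a + s a + s b'" by blast
    have bb': "b' \<noteq> b" "b' \<in> J" using ab unfolding J'_def by auto
    have sep: "s b' + s b \<le> y b - y b'" using psubset.prems(2) bb'(1,2) b(1) bmax by blast
    have sum: "(\<Sum>i\<in>J. 2 * s i) = 2 * s b + (\<Sum>i\<in>J'. 2 * s i)"
      unfolding J'_def using b psubset.hyps by (simp add: sum.remove)
    have "\<forall>j\<in>J. y a \<le> y j \<and> y j \<le> y b"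
      using ab bmax b unfolding J'_def by auto
    moreover have "a \<in> J" using ab unfolding J'_def by auto
    moreover have "(\<Sum>i\<in>J. 2 * s i) \<le> y b - y a + s a + s b"
      using sum ab(4) sep by linarith
    ultimately show ?thesis using b(1) by blast
  qed
qed

lemma dcirc_sym: "dcirc L p q = dcirc L q p"
  unfolding dcirc_def by (simp add: abs_minus_commute)

lemma dcirc_le_abs: "dcirc L p q \<le> \<bar>p - q\<bar>"
  unfolding dcirc_def by simp

lemma dcirc_le_L: "dcirc L p q \<le> L - \<bar>p - q\<bar>"
  unfolding dcirc_def by simp

lemma dcirc_half: "dcirc L p q \<le> L / 2"
  unfolding dcirc_def min_def by auto

lemma dcirc_nonneg: "0 \<le> p \<Longrightarrow> p \<le> L \<Longrightarrow> 0 \<le> q \<Longrightarrow> q \<le> L \<Longrightarrow> 0 \<le> dcirc L p q"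
  unfolding dcirc_def by (auto simp: min_def abs_if)

lemma dcirc_tri:
  assumes "0 \<le> p" "p \<le> L" "0 \<le> q" "q \<le> L" "0 \<le> w" "w \<le> L"
  shows "dcirc L p w \<le> dcirc L p q + dcirc L q w"
  using assms unfolding dcirc_def by (auto simp: min_def abs_if)

lemma circle_pack:
  fixes y s :: "'i \<Rightarrow> real"
  assumes "finite J" "L \<ge> 0" "\<forall>i\<in>J. 0 \<le> y i \<and> y i \<le> L \<and> s i \<le> L / 2"
    "\<forall>i\<in>J. \<forall>j\<in>J. i \<noteq> j \<longrightarrow> s i + s j \<le> dcirc L (y i) (y j)"
  shows "(\<Sum>i\<in>J. 2 * s i) \<le> L"
proof (cases "J = {}")
  case True then show ?thesis using assms by simp
next
  case False
  have "\<forall>i\<in>J. \<forall>j\<in>J. i \<noteq> j \<and> y i \<le> y j \<longrightarrow> s i + s j \<le> y j - y i"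
  proof (intro ballI impI)
    fix i j assume "i \<in> J" "j \<in> J" "i \<noteq> j \<and> y i \<le> y j"
    then show "s i + s j \<le> y j - y i"
      using assms(4) dcirc_le_abs[of L "y i" "y j"] by fastforce
  qed
  from line_pack[OF assms(1) False this] obtain a b where ab: "a \<in> J" "b \<in> J"
    "\<forall>j\<in>J. y a \<le> y j \<and> y j \<le> y b" "(\<Sum>i\<in>J. 2 * s i) \<le> y b - y a + s a + s b"
    by blast
  show ?thesis
  proof (cases "a = b")
    case True
    then show ?thesis using ab assms(3) by fastforce
  next
    case False
    have "s a + s b \<le> dcirc L (y a) (y b)" using assms(4) ab False by blast
    also have "\<dots> \<le> L - \<bar>y a - y b\<bar>" by (rule dcirc_le_L)
    finally show ?thesis using ab by (auto simp: abs_if split: if_splits)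
  qed
qed

lemma packing:
  fixes x y r :: "'i \<Rightarrow> real"
  assumes fin: "finite I" and L: "L \<ge> 0"
    and rng: "\<forall>i\<in>I. 0 \<le> x i \<and> x i \<le> L \<and> 0 \<le> y i \<and> y i \<le> L \<and> 0 \<le> r i \<and> r i \<le> L/2"
    and sep: "\<forall>i\<in>I. \<forall>j\<in>I. i \<noteq> j \<longrightarrow> r i + r j \<le> dcirc L (x i) (x j) + dcirc L (y i) (y j)"
  shows "(\<Sum>i\<in>I. 2 * (r i)^2) \<le> L^2"
proof -
  have slice: "(\<Sum>i\<in>I. 2 * max 0 (r i - dcirc L z (x i))) \<le> L" if z: "z \<in> {0..L}" for z
  proof -
    define s where "s i = r i - dcirc L z (x i)" for i
    define J where "J = {i\<in>I. s i > 0}"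
    have "(\<Sum>i\<in>I. 2 * max 0 (r i - dcirc L z (x i))) = (\<Sum>i\<in>J. 2 * s i)"
      by (rule sum.mono_neutral_cong_right) (use fin in \<open>auto simp: J_def s_def\<close>)
    also have "\<dots> \<le> L"
    proof (rule circle_pack)
      show "finite J" using fin by (simp add: J_def)
      show "0 \<le> L" by (rule L)
      show "\<forall>i\<in>J. 0 \<le> y i \<and> y i \<le> L \<and> s i \<le> L / 2"
      proof
        fix i assume "i \<in> J"
        then have "0 \<le> dcirc L z (x i)" "i \<in> I" using rng z by (auto intro!: dcirc_nonneg simp: J_def)
        then show "0 \<le> y i \<and> y i \<le> L \<and> s i \<le> L / 2" using rng by (force simp: s_def)
      qed
      show "\<forall>i\<in>J. \<forall>j\<in>J. i \<noteq> j \<longrightarrow> s i + s j \<le> dcirc L (y i) (y j)"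
      proof (intro ballI impI)
        fix i j assume ij: "i \<in> J" "j \<in> J" "i \<noteq> j"
        have "dcirc L (x i) (x j) \<le> dcirc L (x i) z + dcirc L z (x j)"
          using ij rng z by (intro dcirc_tri) (auto simp: J_def)
        then show "s i + s j \<le> dcirc L (y i) (y j)"
          using sep ij dcirc_sym[of L z "x i"] by (force simp: J_def s_def)
      qed
    qed
    finally show ?thesis .
  qed
  have int: "((\<lambda>z. \<Sum>i\<in>I. 2 * max 0 (r i - dcirc L z (x i))) has_integral (\<Sum>i\<in>I. 2 * (r i)^2)) {0..L}"
    by (intro has_integral_sum fin has_integral_mult_right circ_tent_int) (use rng in auto)
  have "(\<Sum>i\<in>I. 2 * (r i)^2) \<le> Henstock_Kurzweil_Integration.content {0..L} *\<^sub>R L"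
    by (rule has_integral_le[OF int has_integral_const_real slice])
  then show ?thesis using L by (simp add: power2_eq_square)
qed



lemma tour_nth_lt: "is_tour n T \<Longrightarrow> i < n \<Longrightarrow> T ! i < n"
  unfolding is_tour_def using nth_mem by fastforce

definition Ppos :: "nat \<Rightarrow> (nat \<Rightarrow> nat \<Rightarrow> real) \<Rightarrow> nat list \<Rightarrow> nat \<Rightarrow> real" where
  "Ppos n c T m = (\<Sum>t<m. c (T ! t) (T ! ((t + 1) mod n)))"

lemma Ppos_mono:
  assumes "metric_tsp n c" "is_tour n T" "m \<le> m'" "m' \<le> n"
  shows "Ppos n c T m \<le> Ppos n c T m'"
  unfolding Ppos_def
proof (rule sum_mono2)
  fix b assume "b \<in> {..<m'} - {..<m}"
  then have "b < n" using assms by auto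
  then have "T ! b < n" "T ! ((b + 1) mod n) < n" using tour_nth_lt[OF assms(2)] by auto
  then show "0 \<le> c (T ! b) (T ! ((b + 1) mod n))"
    using assms(1) unfolding metric_tsp_def by blast
qed (use assms in auto)

lemma Ppos_n: "Ppos n c T n = tour_length n c T"
  unfolding Ppos_def tour_length_def by simp

lemma path_bound:
  assumes "metric_tsp n c" "is_tour n T" "m < n" "m \<le> m'" "m' \<le> n"
  shows "c (T ! m) (T ! (m' mod n)) \<le> Ppos n c T m' - Ppos n c T m"
  using assms(4,5)
proof (induction m' rule: dec_induct)
  case base
  have "T ! m < n" using tour_nth_lt assms by blast
  then show ?case using assms(1,3) unfolding metric_tsp_def by simp
next
  case (step k)
  have k: "k < n" using step by simp
  have lt: "T ! m < n" "T ! k < n" "T ! (Suc k mod n) < n"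
    using tour_nth_lt[OF assms(2)] assms k by auto
  have "c (T ! m) (T ! (Suc k mod n)) \<le> c (T ! m) (T ! k) + c (T ! k) (T ! (Suc k mod n))"
    using assms(1) lt unfolding metric_tsp_def by blast
  also have "c (T ! m) (T ! k) \<le> Ppos n c T k - Ppos n c T m"
    using step k by simp
  finally show ?case by (simp add: Ppos_def)
qed

lemma Ppos_range:
  assumes "metric_tsp n c" "is_tour n T" "m \<le> n"
  shows "0 \<le> Ppos n c T m \<and> Ppos n c T m \<le> tour_length n c T"
proof -
  have "Ppos n c T 0 \<le> Ppos n c T m" by (rule Ppos_mono[OF assms(1,2)]) (use assms in auto)
  moreover have "Ppos n c T m \<le> Ppos n c T n" by (rule Ppos_mono[OF assms(1,2)]) (use assms in auto)
  ultimately show ?thesis using Ppos_n[of n c T] by (simp add: Ppos_def)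
qed

lemma dist_bound:
  assumes "metric_tsp n c" "is_tour n T" "m < n" "m' < n"
  shows "c (T ! m) (T ! m') \<le> dcirc (tour_length n c T) (Ppos n c T m) (Ppos n c T m')"
proof -
  have gen: "c (T ! a) (T ! b) \<le> Ppos n c T b - Ppos n c T a \<and>
             c (T ! b) (T ! a) \<le> tour_length n c T - (Ppos n c T b - Ppos n c T a)"
    if ab: "a \<le> b" "b < n" for a b
  proof
    have 1: "c (T ! a) (T ! b) \<le> Ppos n c T b - Ppos n c T a"
      using path_bound[OF assms(1,2), of a b] ab by simp
    have ltn: "T ! a < n" "T ! b < n" "T ! 0 < n" using tour_nth_lt[OF assms(2)] ab by auto
    have "c (T ! b) (T ! a) \<le> c (T ! b) (T ! 0) + c (T ! 0) (T ! a)"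
      using assms(1) ltn unfolding metric_tsp_def by blast
    also have "c (T ! b) (T ! 0) \<le> Ppos n c T n - Ppos n c T b"
      using path_bound[OF assms(1,2), of b n] ab by simp
    also have "c (T ! 0) (T ! a) \<le> Ppos n c T a - Ppos n c T 0"
      using path_bound[OF assms(1,2), of 0 a] ab by simp
    finally show "c (T ! b) (T ! a) \<le> tour_length n c T - (Ppos n c T b - Ppos n c T a)"
      using Ppos_n[of n c T] by (simp add: Ppos_def)
    show "c (T ! a) (T ! b) \<le> Ppos n c T b - Ppos n c T a" by (rule 1)
  qed
  show ?thesis
  proof (cases "m \<le> m'")
    case True
    have "Ppos n c T m \<le> Ppos n c T m'" using Ppos_mono[OF assms(1,2) True] assms by simp
    moreover have "c (T ! m) (T ! m') = c (T ! m') (T ! m)"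
      using assms tour_nth_lt[OF assms(2)] unfolding metric_tsp_def by auto
    ultimately show ?thesis using gen[OF True assms(4)] unfolding dcirc_def by (auto simp: abs_if min_def)
  next
    case False
    then have F: "m' \<le> m" by simp
    have "Ppos n c T m' \<le> Ppos n c T m" using Ppos_mono[OF assms(1,2) F] assms by simp
    moreover have "c (T ! m) (T ! m') = c (T ! m') (T ! m)"
      using assms tour_nth_lt[OF assms(2)] unfolding metric_tsp_def by auto
    ultimately show ?thesis using gen[OF F assms(3)] unfolding dcirc_def by (auto simp: abs_if min_def)
  qed
qed

lemma part1:
  assumes met: "metric_tsp n c" and opt: "two_optimal n c T'" and sh: "shortest_tour n c Tstar"
  shows "tour_length n c T' \<le> sqrt (real n / 2) * tour_length n c Tstar"
proof -
  define L where "L = tour_length n c Tstar"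
  have ts: "is_tour n Tstar" using sh unfolding shortest_tour_def by simp
  have tp: "is_tour n T'" using opt unfolding two_optimal_def by simp
  define idx where "idx v = (SOME m. m < n \<and> Tstar ! m = v)" for v
  have idx: "idx v < n \<and> Tstar ! idx v = v" if "v < n" for v
  proof -
    have "v \<in> set Tstar" using ts that unfolding is_tour_def by auto
    then have "\<exists>m. m < n \<and> Tstar ! m = v" using ts unfolding is_tour_def by (auto simp: in_set_conv_nth)
    then show ?thesis unfolding idx_def by (rule someI_ex)
  qed
  define pos where "pos v = Ppos n c Tstar (idx v)" for v
  have posr: "0 \<le> pos v \<and> pos v \<le> L" if "v < n" for v
    using Ppos_range[OF met ts, of "idx v"] idx[OF that] unfolding pos_def L_def by simp
  have cd: "c u v \<le> dcirc L (pos u) (pos v)" if "u < n" "v < n" for u v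
    using dist_bound[OF met ts, of "idx u" "idx v"] idx[OF that(1)] idx[OF that(2)]
    unfolding pos_def L_def by simp
  have L0: "0 \<le> L" unfolding L_def using Ppos_range[OF met ts, of n] by (simp add: Ppos_n)
  define a where "a i = T' ! i" for i
  define b where "b i = T' ! ((i + 1) mod n)" for i
  define l where "l i = c (a i) (b i)" for i
  have ab: "a i < n \<and> b i < n" if "i < n" for i
    unfolding a_def b_def using tour_nth_lt[OF tp] that by auto
  have pk: "(\<Sum>i\<in>{..<n}. 2 * (l i)^2) \<le> L^2"
  proof (rule packing[where x="\<lambda>i. pos (a i)" and y="\<lambda>i. pos (b i)"])
    show "finite {..<n}" by simp
    show "0 \<le> L" by (rule L0)
    show "\<forall>i\<in>{..<n}. 0 \<le> pos (a i) \<and> pos (a i) \<le> L \<and> 0 \<le> pos (b i) \<and> pos (b i) \<le> L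
            \<and> 0 \<le> l i \<and> l i \<le> L / 2"
    proof
      fix i assume "i \<in> {..<n}"
      then have i: "a i < n" "b i < n" using ab by auto
      have "l i \<le> L / 2" using cd[OF i] dcirc_half[of L] unfolding l_def by (meson order_trans)
      moreover have "0 \<le> l i" using met i unfolding metric_tsp_def l_def by blast
      ultimately show "0 \<le> pos (a i) \<and> pos (a i) \<le> L \<and> 0 \<le> pos (b i) \<and> pos (b i) \<le> L
            \<and> 0 \<le> l i \<and> l i \<le> L / 2" using posr[OF i(1)] posr[OF i(2)] by simp
    qed
    show "\<forall>i\<in>{..<n}. \<forall>j\<in>{..<n}. i \<noteq> j \<longrightarrow>
           l i + l j \<le> dcirc L (pos (a i)) (pos (a j)) + dcirc L (pos (b i)) (pos (b j))"
    proof (intro ballI impI)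
      fix i j assume ij: "i \<in> {..<n}" "j \<in> {..<n}" "i \<noteq> j"
      have "l i + l j \<le> c (a i) (a j) + c (b i) (b j)"
        using opt ij unfolding two_optimal_def l_def a_def b_def Let_def by auto
      also have "\<dots> \<le> dcirc L (pos (a i)) (pos (a j)) + dcirc L (pos (b i)) (pos (b j))"
        using cd ab ij by (simp add: add_mono)
      finally show "l i + l j \<le> dcirc L (pos (a i)) (pos (a j)) + dcirc L (pos (b i)) (pos (b j))" .
    qed
  qed
  have tl: "tour_length n c T' = (\<Sum>i\<in>{..<n}. l i)"
    unfolding tour_length_def l_def a_def b_def by simp
  have lnn: "0 \<le> (\<Sum>i\<in>{..<n}. l i)"
    using met ab unfolding metric_tsp_def l_def by (intro sum_nonneg) auto
  have "(\<Sum>i\<in>{..<n}. l i)^2 \<le> (\<Sum>i\<in>{..<n}. (l i)^2) * card {..<n}"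
    by (rule sum_squared_le_sum_of_squares)
  also have "\<dots> \<le> (L^2 / 2) * real n"
  proof -
    have "(\<Sum>i\<in>{..<n}. (l i)^2) \<le> L^2 / 2" using pk by (simp add: sum_distrib_left[symmetric])
    then show ?thesis unfolding card_lessThan by (intro mult_right_mono) auto
  qed
  finally have sq: "(\<Sum>i\<in>{..<n}. l i)^2 \<le> (real n / 2) * L^2" by (simp add: field_simps)
  have "(\<Sum>i\<in>{..<n}. l i) = sqrt ((\<Sum>i\<in>{..<n}. l i)^2)" using lnn by simp
  also have "\<dots> \<le> sqrt ((real n / 2) * L^2)" using sq by (rule real_sqrt_le_mono)
  also have "\<dots> = sqrt (real n / 2) * sqrt (L^2)" by (rule real_sqrt_mult)
  also have "\<dots> = sqrt (real n / 2) * L" using L0 by simp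
  finally show ?thesis using tl L_def by simp
qed



definition tsp_cls :: "nat \<Rightarrow> nat \<Rightarrow> nat" where
  "tsp_cls k t = (if even t then 2 * ((t div 2) mod k) else 2 * (((t div 2) div k + (t div 2) mod k) mod k) + 1)"

definition tsp_fm :: "nat \<Rightarrow> nat \<Rightarrow> real" where
  "tsp_fm u v = (if u = v then 0 else if u mod 2 \<noteq> v mod 2 then 1 else 2)"

definition tsp_cc :: "nat \<Rightarrow> nat \<Rightarrow> nat \<Rightarrow> real" where
  "tsp_cc k x y = tsp_fm (tsp_cls k x) (tsp_cls k y)"

definition tsp_gs :: "nat \<Rightarrow> nat \<Rightarrow> nat" where
  "tsp_gs k m = (if even (m div k) then 2 * ((m mod k) * k + (m div k) div 2)
             else 2 * ((m mod k) * k + ((m div k) div 2 + k - m mod k) mod k) + 1)"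

lemma tsp_fm_tri: "tsp_fm u w \<le> tsp_fm u v + tsp_fm v w"
  unfolding tsp_fm_def by auto

lemma tsp_fm_sym: "tsp_fm u v = tsp_fm v u"
  unfolding tsp_fm_def by auto

lemma tsp_fm_refl: "tsp_fm u u = 0"
  unfolding tsp_fm_def by auto

lemma tsp_fm_nonneg0: "0 \<le> tsp_fm u v"
  unfolding tsp_fm_def by auto

lemma tsp_cc_metric: "metric_tsp n (tsp_cc k)"
  unfolding metric_tsp_def tsp_cc_def by (intro conjI allI impI tsp_fm_nonneg0 tsp_fm_refl tsp_fm_sym tsp_fm_tri)

lemma tsp_cls_parity: "tsp_cls k t mod 2 = t mod 2"
  unfolding tsp_cls_def by (auto simp: odd_iff_mod_2_eq_one)

lemma tsp_fm_diff_parity: "u mod 2 \<noteq> v mod 2 \<Longrightarrow> tsp_fm u v = 1"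
  unfolding tsp_fm_def by auto

lemma tsp_fm_same_parity: "u mod 2 = v mod 2 \<Longrightarrow> u \<noteq> v \<Longrightarrow> tsp_fm u v = 2"
  unfolding tsp_fm_def by auto

lemma tsp_fm_nonneg: "0 \<le> tsp_fm u v"
  unfolding tsp_fm_def by auto

lemma mod_recover1:
  assumes "k \<ge> 1"
  shows "s mod k = ((Suc s) mod k + (k - 1)) mod k"
proof -
  have "((Suc s) mod k + (k - 1)) mod k = (Suc s + (k - 1)) mod k" by (simp add: mod_add_left_eq)
  also have "Suc s + (k - 1) = s + k" using assms by simp
  finally show ?thesis by simp
qed

lemma mod_recover2:
  fixes s k :: nat
  assumes "k \<ge> 1"
  shows "(s div k) mod k = ((s div k + s mod k) mod k + (k - s mod k)) mod k"
proof -
  have "((s div k + s mod k) mod k + (k - s mod k)) mod k = (s div k + s mod k + (k - s mod k)) mod k"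
    by (rule mod_add_left_eq)
  also have "s div k + s mod k + (k - s mod k) = s div k + k" using assms
    by (simp add: less_imp_le_nat)
  finally show ?thesis by simp
qed

lemma next_parity:
  fixes i n :: nat
  assumes "even n" "i < n"
  shows "((i + 1) mod n) mod 2 \<noteq> i mod 2"
proof (cases "i + 1 < n")
  case True
  then have "(i + 1) mod n = i + 1" by simp
  then show ?thesis by (simp add: mod_Suc)
next
  case False
  then have e: "i + 1 = n" using assms by simp
  then have "odd i" using assms(1) by auto
  moreover have "(i + 1) mod n = 0" using e by simp
  ultimately show ?thesis by (simp add: odd_iff_mod_2_eq_one)
qed

lemma tsp_cls_even: "tsp_cls k (2 * s) = 2 * (s mod k)"
  unfolding tsp_cls_def by simp

lemma tsp_cls_odd: "tsp_cls k (2 * s + 1) = 2 * ((s div k + s mod k) mod k) + 1"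
  unfolding tsp_cls_def by simp

lemma tsp_cls_odd_Suc: "tsp_cls k (Suc (2 * s)) = 2 * ((s div k + s mod k) mod k) + 1"
  unfolding tsp_cls_def by simp

lemma tsp_cls_wrap:
  assumes "k \<ge> 1"
  shows "tsp_cls k ((2 * s + 2) mod (2 * k * k)) = 2 * ((s + 1) mod k)"
proof -
  have "(2 * s + 2) mod (2 * k * k) = 2 * ((s + 1) mod (k * k))"
    using mod_mult_mult1[of 2 "s+1" "k*k"] by (simp add: mult.assoc)
  moreover have "((s + 1) mod (k * k)) mod k = (s + 1) mod k"
    by (simp add: mod_mod_cancel)
  ultimately show ?thesis by (simp add: tsp_cls_even)
qed

lemma div_lt_k: "s < k * k \<Longrightarrow> s div k < (k::nat)"
  by (simp add: less_mult_imp_div_less)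

lemma tsp_cls_inj:
  fixes k i j :: nat
  assumes k: "k \<ge> 1" and ij: "i < 2 * k * k" "j < 2 * k * k" "i mod 2 = j mod 2"
    and c1: "tsp_cls k i = tsp_cls k j" and c2: "tsp_cls k ((i + 1) mod (2 * k * k)) = tsp_cls k ((j + 1) mod (2 * k * k))"
  shows "i = j"
proof (cases "even i")
  case True
  then obtain s where s: "i = 2 * s" by blast
  have "even j" using True ij(3) by (simp add: even_iff_mod_2_eq_zero)
  then obtain s' where s': "j = 2 * s'" by blast
  have kk: "2 * k * k = 2 * (k * k)" by simp
  have ss: "s < k * k" "s' < k * k" using ij s s' unfolding kk by linarith+
  have "(2 * s + 1) mod (2 * k * k) = 2 * s + 1" "(2 * s' + 1) mod (2 * k * k) = 2 * s' + 1"
    using ss by auto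
  then have e2: "(s div k + s mod k) mod k = (s' div k + s' mod k) mod k"
    using c2 unfolding s s' by (simp add: tsp_cls_odd_Suc)
  have e1: "s mod k = s' mod k" using c1 unfolding s s' by (simp add: tsp_cls_even)
  have "(s div k) mod k = (s' div k) mod k"
    using mod_recover2[OF k, of s] mod_recover2[OF k, of s'] e1 e2 by simp
  then have "s div k = s' div k" using div_lt_k[OF ss(1)] div_lt_k[OF ss(2)] by simp
  moreover have "s = s div k * k + s mod k" "s' = s' div k * k + s' mod k" by simp_all
  ultimately have "s = s'" using e1 by simp
  then show ?thesis using s s' by simp
next
  case False
  then obtain s where s: "i = 2 * s + 1" using oddE by blast
  have "odd j" using False ij(3) by (simp add: even_iff_mod_2_eq_zero)
  then obtain s' where s': "j = 2 * s' + 1" using oddE by blast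
  have kk: "2 * k * k = 2 * (k * k)" by simp
  have ss: "s < k * k" "s' < k * k" using ij s s' unfolding kk by linarith+
  have "(s + 1) mod k = (s' + 1) mod k"
    using c2 tsp_cls_wrap[OF k, of s] tsp_cls_wrap[OF k, of s'] unfolding s s' by (simp add: add.assoc)
  then have e1: "s mod k = s' mod k" using mod_recover1[OF k, of s] mod_recover1[OF k, of s'] by simp
  have e2: "(s div k + s mod k) mod k = (s' div k + s' mod k) mod k"
    using c1 unfolding s s' by (simp only: tsp_cls_odd)
  have "(s div k) mod k = (s' div k) mod k"
    using mod_recover2[OF k, of s] mod_recover2[OF k, of s'] e1 e2 by simp
  then have "s div k = s' div k" using div_lt_k[OF ss(1)] div_lt_k[OF ss(2)] by simp
  moreover have "s = s div k * k + s mod k" "s' = s' div k * k + s' mod k" by simp_all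
  ultimately have "s = s'" using e1 by simp
  then show ?thesis using s s' by simp
qed

lemma upt_tour: "is_tour n [0..<n]"
  unfolding is_tour_def by simp

lemma two_opt_constr:
  assumes k: "k \<ge> 1" and n: "n = 2 * k * k"
  shows "two_optimal n (tsp_cc k) [0..<n]"
  unfolding two_optimal_def
proof (intro conjI upt_tour allI impI)
  fix i j assume ij: "i < n" "j < n" "i \<noteq> j"
  define bi where "bi = (i + 1) mod n"
  define bj where "bj = (j + 1) mod n"
  have nn: "n > 0" "even n" using k n by auto
  have b: "bi < n" "bj < n" unfolding bi_def bj_def using nn by auto
  have pi: "bi mod 2 \<noteq> i mod 2" "bj mod 2 \<noteq> j mod 2"
    unfolding bi_def bj_def using next_parity[OF nn(2)] ij by auto
  have c1: "tsp_cc k i bi = 1" "tsp_cc k j bj = 1"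
    unfolding tsp_cc_def using pi by (auto intro!: tsp_fm_diff_parity simp: tsp_cls_parity)
  have "tsp_cc k i bi + tsp_cc k j bj \<le> tsp_cc k i j + tsp_cc k bi bj"
  proof (cases "i mod 2 = j mod 2")
    case True
    have bb: "bi mod 2 = bj mod 2" using True pi by linarith
    have "\<not> (tsp_cls k i = tsp_cls k j \<and> tsp_cls k bi = tsp_cls k bj)"
      using tsp_cls_inj[OF k, of i j] ij True unfolding bi_def bj_def n by auto
    then have "tsp_cc k i j = 2 \<or> tsp_cc k bi bj = 2"
      unfolding tsp_cc_def using True bb by (auto intro!: tsp_fm_same_parity simp: tsp_cls_parity)
    then show ?thesis using c1 tsp_fm_nonneg unfolding tsp_cc_def by (smt (verit))
  next
    case False
    have bb: "bi mod 2 \<noteq> bj mod 2" using False pi by linarith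
    have "tsp_cc k i j = 1" "tsp_cc k bi bj = 1"
      unfolding tsp_cc_def using False bb by (auto intro!: tsp_fm_diff_parity simp: tsp_cls_parity)
    then show ?thesis using c1 by simp
  qed
  then show "let a = [0..<n] ! i; b = [0..<n] ! ((i + 1) mod n); x = [0..<n] ! j; y = [0..<n] ! ((j + 1) mod n)
         in tsp_cc k a b + tsp_cc k x y \<le> tsp_cc k a x + tsp_cc k b y"
    using ij b unfolding bi_def bj_def Let_def by simp
qed

lemma len_upt:
  assumes k: "k \<ge> 1" and n: "n = 2 * k * k"
  shows "tour_length n (tsp_cc k) [0..<n] = real n"
proof -
  have nn: "n > 0" "even n" using k n by auto
  have "tour_length n (tsp_cc k) [0..<n] = (\<Sum>i<n. 1)"
    unfolding tour_length_def
  proof (rule sum.cong[OF refl])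
    fix i assume "i \<in> {..<n}"
    then have i: "i < n" "(i + 1) mod n < n" using nn by auto
    have "((i + 1) mod n) mod 2 \<noteq> i mod 2" using next_parity[OF nn(2) i(1)] .
    then have "tsp_cc k i ((i + 1) mod n) = 1" unfolding tsp_cc_def by (auto intro!: tsp_fm_diff_parity simp: tsp_cls_parity)
    then show "tsp_cc k ([0..<n] ! i) ([0..<n] ! ((i + 1) mod n)) = 1" using i by simp
  qed
  then show ?thesis by simp
qed

lemma tsp_gs_props:
  assumes k: "k \<ge> 1" and m: "m < 2 * k * k"
  shows "tsp_gs k m < 2 * k * k \<and> tsp_cls k (tsp_gs k m) = m div k \<and> (tsp_gs k m div 2) div k = m mod k"
proof -
  define u where "u = m div k"
  define r where "r = m mod k"
  have kp: "k > 0" using k by simp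
  have u: "u < 2 * k" unfolding u_def using m by (simp add: less_mult_imp_div_less)
  have r: "r < k" unfolding r_def using kp by simp
  have ud: "u div 2 < k" using u by simp
  have bnd: "r * k + w < k * k" if "w < k" for w
  proof -
    have "(r + 1) * k \<le> k * k" using r by (intro mult_le_mono1) simp
    then show ?thesis using that by (simp add: algebra_simps)
  qed
  have dv: "(r * k + w) div k = r" "(r * k + w) mod k = w" if "w < k" for w
    using that kp by (simp_all add: add.commute)
  show ?thesis
  proof (cases "even u")
    case True
    define w where "w = u div 2"
    have g: "tsp_gs k m = 2 * (r * k + w)" unfolding tsp_gs_def w_def using True by (simp add: u_def r_def)
    have w: "w < k" using ud w_def by simp
    have "tsp_cls k (tsp_gs k m) = 2 * w" unfolding g tsp_cls_even using dv[OF w] by simp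
    also have "2 * w = u" using True unfolding w_def by simp
    finally show ?thesis using g bnd[OF w] dv[OF w] by (simp add: u_def r_def)
  next
    case False
    define w where "w = (u div 2 + k - r) mod k"
    have g: "tsp_gs k m = 2 * (r * k + w) + 1" unfolding tsp_gs_def w_def using False by (simp add: u_def r_def)
    have w: "w < k" using kp w_def by simp
    have "(r + w) mod k = (r + (u div 2 + k - r)) mod k" unfolding w_def by (simp add: mod_add_right_eq)
    also have "r + (u div 2 + k - r) = u div 2 + k" using r by simp
    also have "(u div 2 + k) mod k = u div 2" using ud by simp
    finally have rw: "(r + w) mod k = u div 2" .
    have "tsp_cls k (tsp_gs k m) = 2 * ((r + w) mod k) + 1" unfolding g tsp_cls_odd using dv[OF w] by simp
    also have "\<dots> = u" using rw False by simp
    finally show ?thesis using g bnd[OF w] dv[OF w] by (simp add: u_def r_def)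
  qed
qed

lemma tsp_gs_tour:
  assumes k: "k \<ge> 1" and n: "n = 2 * k * k"
  shows "is_tour n (map (tsp_gs k) [0..<n])"
proof -
  have inj: "inj_on (tsp_gs k) {0..<n}"
  proof (rule inj_onI)
    fix m m' assume mm: "m \<in> {0..<n}" "m' \<in> {0..<n}" "tsp_gs k m = tsp_gs k m'"
    have p: "tsp_cls k (tsp_gs k m) = m div k \<and> (tsp_gs k m div 2) div k = m mod k"
            "tsp_cls k (tsp_gs k m') = m' div k \<and> (tsp_gs k m' div 2) div k = m' mod k"
      using tsp_gs_props[OF k, of m] tsp_gs_props[OF k, of m'] mm n by auto
    then have "m div k = m' div k" "m mod k = m' mod k" using mm(3) by auto
    then show "m = m'" by (metis div_mult_mod_eq)
  qed
  have sub: "tsp_gs k ` {0..<n} \<subseteq> {0..<n}" using tsp_gs_props[OF k] n by auto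
  have "card (tsp_gs k ` {0..<n}) = card {0..<n}" using card_image[OF inj] .
  then have "tsp_gs k ` {0..<n} = {0..<n}" using card_subset_eq[OF _ sub] by simp
  then show ?thesis unfolding is_tour_def using inj by (simp add: distinct_map)
qed

lemma sum_split_nat:
  fixes a b :: nat
  shows "(\<Sum>m<a + b. f m) = (\<Sum>m<a. f m) + (\<Sum>j<b. f (a + j))"
  by (induction b) (auto simp: add.assoc)

lemma count_blocks:
  assumes k: "k \<ge> 1"
  shows "(\<Sum>m<N * k. (if Suc m mod k = 0 then 1 else 0 :: real)) = real N"
proof (induction N)
  case 0 then show ?case by simp
next
  case (Suc N)
  have blk: "(\<Sum>j<k. (if Suc (N * k + j) mod k = 0 then 1 else 0 :: real)) = 1"
  proof -
    have "(\<Sum>j<k. (if Suc (N * k + j) mod k = 0 then 1 else 0 :: real)) =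
          (\<Sum>j<k. (if j = k - 1 then 1 else 0 :: real))"
    proof (rule sum.cong[OF refl])
      fix j assume j: "j \<in> {..<k}"
      have "Suc (N * k + j) mod k = Suc j mod k"
        by (metis add_Suc_right mod_mult_self3 add.commute)
      also have "Suc j mod k = 0 \<longleftrightarrow> j = k - 1" using j k
        by (cases "Suc j = k") auto
      finally show "(if Suc (N * k + j) mod k = 0 then 1 else 0 :: real) = (if j = k - 1 then 1 else 0)"
        by simp
    qed
    also have "\<dots> = 1" using k by (simp add: sum.delta)
    finally show ?thesis .
  qed
  have "Suc N * k = N * k + k" by simp
  then show ?case using Suc blk by (simp only: sum_split_nat)
qed

lemma tsp_gs_len:
  assumes k: "k \<ge> 1" and n: "n = 2 * k * k"
  shows "tour_length n (tsp_cc k) (map (tsp_gs k) [0..<n]) = 2 * real k"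
proof -
  have "tour_length n (tsp_cc k) (map (tsp_gs k) [0..<n]) = (\<Sum>m<n. (if Suc m mod k = 0 then 1 else 0 :: real))"
    unfolding tour_length_def
  proof (rule sum.cong[OF refl])
    fix m assume "m \<in> {..<n}"
    then have m: "m < n" by simp
    have nn: "n > 0" using k n by simp
    define m' where "m' = (m + 1) mod n"
    have m': "m' < n" unfolding m'_def using nn by simp
    have e: "tsp_cc k (map (tsp_gs k) [0..<n] ! m) (map (tsp_gs k) [0..<n] ! ((m + 1) mod n)) = tsp_fm (m div k) (m' div k)"
      using m m' tsp_gs_props[OF k, of m] tsp_gs_props[OF k, of m'] n unfolding tsp_cc_def m'_def by simp
    show "tsp_cc k (map (tsp_gs k) [0..<n] ! m) (map (tsp_gs k) [0..<n] ! ((m + 1) mod n)) =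
          (if Suc m mod k = 0 then 1 else 0)"
    proof (cases "Suc m mod k = 0")
      case False
      have "Suc m \<noteq> n"
      proof
        assume "Suc m = n"
        then have "Suc m mod k = 0" using n by simp
        then show False using False by simp
      qed
      then have "m' = Suc m" unfolding m'_def using m by simp
      moreover have "Suc m div k = m div k" using False by (simp add: div_Suc mod_Suc split: if_splits)
      ultimately show ?thesis using e False by (simp add: tsp_fm_refl)
    next
      case True
      have sd: "Suc m div k = Suc (m div k)" using True k by (simp add: div_Suc mod_Suc split: if_splits)
      show ?thesis
      proof (cases "Suc m = n")
        case False
        then have "m' = Suc m" unfolding m'_def using m by simp
        then have "m' div k = Suc (m div k)" using sd by simp
        then have "tsp_fm (m div k) (m' div k) = 1" by (intro tsp_fm_diff_parity) (auto simp: mod_Suc)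
        then show ?thesis using e True by simp
      next
        case c: True
        then have "m' = 0" unfolding m'_def by simp
        moreover have "Suc (m div k) = 2 * k" using sd c n k by simp
        ultimately have "tsp_fm (m div k) (m' div k) = 1"
        proof (intro tsp_fm_diff_parity)
          assume a: "m' = 0" "Suc (m div k) = 2 * k"
          have "odd (m div k)" using a(2) by (metis even_Suc even_mult_iff even_numeral)
          then show "m div k mod 2 \<noteq> m' div k mod 2" using a(1) by (simp add: odd_iff_mod_2_eq_one)
        qed
        then show ?thesis using e True by simp
      qed
    qed
  qed
  also have "\<dots> = real (2 * k)"
    using count_blocks[OF k, of "2 * k"] n by simp
  finally show ?thesis by simp
qed


theorem theorem1:
  shows "(\<forall>(n::nat) c T' Tstar. n \<ge> 3 \<and> metric_tsp n c \<and> two_optimal n c T' \<and>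
            shortest_tour n c Tstar \<longrightarrow>
            tour_length n c T' \<le> sqrt (real n / 2) * tour_length n c Tstar)
       \<and> (\<forall>k::nat. k \<ge> 1 \<longrightarrow>
            (let n = 2 * k^2 in
             \<exists>c T' Tstar. metric_tsp n c \<and> two_optimal n c T' \<and> shortest_tour n c Tstar \<and>
               tour_length n c T' = sqrt (real n / 2) * tour_length n c Tstar \<and>
               tour_length n c Tstar > 0))"
proof (intro conjI allI impI)
  fix n :: nat and c T' Tstar
  assume "3 \<le> n \<and> metric_tsp n c \<and> two_optimal n c T' \<and> shortest_tour n c Tstar"
  then show "tour_length n c T' \<le> sqrt (real n / 2) * tour_length n c Tstar"
    using part1 by blast
next
  fix k :: nat assume k: "1 \<le> k"
  define n where "n = 2 * k^2"
  have n': "n = 2 * k * k" unfolding n_def by (simp add: power2_eq_square)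
  have sq: "sqrt (real n / 2) = real k" unfolding n_def by simp
  define c where "c = tsp_cc k"
  have met: "metric_tsp n c" unfolding c_def by (rule tsp_cc_metric)
  have opt: "two_optimal n c [0..<n]" unfolding c_def by (rule two_opt_constr[OF k n'])
  have lenT': "tour_length n c [0..<n] = real n" unfolding c_def by (rule len_upt[OF k n'])
  define S where "S = {T. is_tour n T}"
  have finS: "finite S"
    by (rule finite_subset[OF _ finite_lists_length_eq[of "{0..<n}" n]]) (auto simp: S_def is_tour_def)
  have T0: "map (tsp_gs k) [0..<n] \<in> S" unfolding S_def using tsp_gs_tour[OF k n'] by simp
  have len0: "tour_length n c (map (tsp_gs k) [0..<n]) = 2 * real k"
    unfolding c_def by (rule tsp_gs_len[OF k n'])
  have "Min (tour_length n c ` S) \<in> tour_length n c ` S" using finS T0 by (intro Min_in) auto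
  then obtain Tm where Tm: "Tm \<in> S" "tour_length n c Tm = Min (tour_length n c ` S)" by force
  have minT: "tour_length n c Tm \<le> tour_length n c T" if "T \<in> S" for T
    using Tm finS that by simp
  have sh: "shortest_tour n c Tm" unfolding shortest_tour_def using Tm(1) minT by (simp add: S_def)
  have up: "tour_length n c Tm \<le> 2 * real k" using minT[OF T0] len0 by simp
  have "real n \<le> real k * tour_length n c Tm" using part1[OF met opt sh] lenT' sq by simp
  moreover have "real n = real k * (2 * real k)" unfolding n' by simp
  ultimately have "real k * (2 * real k) \<le> real k * tour_length n c Tm" by simp
  then have lo: "2 * real k \<le> tour_length n c Tm" using k by simp
  have eq: "tour_length n c Tm = 2 * real k" using up lo by simp
  have "metric_tsp n c \<and> two_optimal n c [0..<n] \<and> shortest_tour n c Tm \<and>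
        tour_length n c [0..<n] = sqrt (real n / 2) * tour_length n c Tm \<and> tour_length n c Tm > 0"
    using met opt sh lenT' sq eq k n' by simp
  then show "let n = 2 * k^2 in
             \<exists>c T' Tstar. metric_tsp n c \<and> two_optimal n c T' \<and> shortest_tour n c Tstar \<and>
               tour_length n c T' = sqrt (real n / 2) * tour_length n c Tstar \<and>
               tour_length n c Tstar > 0"
    unfolding Let_def n_def[symmetric] by blast
qed

end
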